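(* Let $p>3$ be a prime and for $1\le k\le p-1$ define $$G(p,k)=(-1)^{p+k}\frac{p\binom{2p-1}{p-1}\binom{4p+2k-2}{2p+k-1}\binom{2p-k-1}{p-1}\binom{2p+k-1}{2k}}{4^{5p-k-4}\binom{2k}{k}}.$$ Then $$G\Big(p,\frac{p+1}{2}\Big)\equiv(-1)^{(p-1)/2}3p\left(1-5pq_p(2)+15p^2q_p(2)^2\right)\pmod{p^4}.$$
   Context: $q_p(2)=(2^{p-1}-1)/p$ is the Fermat quotient. Congruences between rationals modulo $p^m$ mean the difference is $p^m$ times a rational with denominator prime to $p$. *)

theory Defs
  imports Complex_Main "HOL-Computational_Algebra.Primes"
begin

definition fermat_quotient2 :: "nat \<Rightarrow> rat" where
  "fermat_quotient2 p = (2 ^ (p - 1) - 1) / of_nat p"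

definition rat_cong_pow :: "rat \<Rightarrow> rat \<Rightarrow> nat \<Rightarrow> nat \<Rightarrow> bool" where
  "rat_cong_pow a b p m \<longleftrightarrow>
     (\<exists>r::rat. a - b = of_nat (p ^ m) * r \<and> coprime (snd (quotient_of r)) (int p))"

definition G :: "nat \<Rightarrow> nat \<Rightarrow> rat" where
  "G p k = (-1) ^ (p + k) *
     (of_nat p * of_nat ((2*p - 1) choose (p - 1)) * of_nat ((4*p + 2*k - 2) choose (2*p + k - 1))
      * of_nat ((2*p - k - 1) choose (p - 1)) * of_nat ((2*p + k - 1) choose (2*k)))
     / (4 ^ (5*p - k - 4) * of_nat ((2*k) choose k))"

end

theory Submission
  imports Defs "HOL-Number_Theory.Residues"
begin

definition pint :: "nat \<Rightarrow> rat \<Rightarrow> bool" where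
  "pint p r \<longleftrightarrow> (\<exists>a b::int. \<not> int p dvd b \<and> r = of_int a / of_int b)"

definition pc :: "nat \<Rightarrow> nat \<Rightarrow> rat \<Rightarrow> rat \<Rightarrow> bool" where
  "pc p n x y \<longleftrightarrow> (\<exists>r. pint p r \<and> x - y = of_nat p ^ n * r)"

lemma coprime_aux: fixes p::nat and r::rat assumes pr: "prime p" and ab: "\<not> int p dvd b" "r = of_int a / of_int b"
  shows "coprime (snd (quotient_of r)) (int p)"
proof -
  obtain n d where nd: "quotient_of r = (n, d)" by (cases "quotient_of r")
  have d0: "d > 0" using quotient_of_denom_pos[OF nd] .
  have cop: "coprime n d" using quotient_of_coprime[OF nd] .
  have rr: "r = of_int n / of_int d" using quotient_of_div[OF nd] .
  have b0: "b \<noteq> 0" using ab by auto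
  have "of_int a / of_int b = (of_int n / of_int d :: rat)" using ab rr by simp
  hence "of_int (a * d) = (of_int (n * b) :: rat)" using b0 d0 by (simp add: field_simps)
  hence "a * d = n * b" by (simp only: of_int_eq_iff)
  hence "d dvd n * b" unfolding dvd_def by (intro exI[of _ a]) (simp add: mult.commute)
  moreover have "coprime d n" using cop by (simp add: coprime_commute)
  ultimately have "d dvd b" using coprime_dvd_mult_right_iff by blast
  hence "\<not> int p dvd d" using ab(1) dvd_trans by blast
  moreover have "prime (int p)" using pr by simp
  ultimately have "coprime (int p) d" using prime_imp_coprime by blast
  thus ?thesis using nd by (simp add: coprime_commute)
qed

lemma sum_split_refl:
  fixes h :: "nat \<Rightarrow> 'a::comm_monoid_add"
  shows "(\<Sum>j=1..2*m. h j) = (\<Sum>i=1..m. h i) + (\<Sum>i=1..m. h (2*m+1-i))"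
proof -
  have "(\<Sum>j=1..m+m. h j) = (\<Sum>j=1..m. h j) + (\<Sum>j=m+1..m+m. h j)"
    by (rule sum.ub_add_nat) simp
  also have "(\<Sum>j=m+1..m+m. h j) = (\<Sum>k=1..m. h (m + k))"
    using sum.shift_bounds_cl_nat_ivl[of h 1 m m] by (simp add: add.commute)
  also have "\<dots> = (\<Sum>k=1..m. h (m + (m + 1 - k)))"
    by (rule sum.atLeastAtMost_rev)
  also have "\<dots> = (\<Sum>k=1..m. h (2*m+1-k))"
    by (rule sum.cong) (auto simp: mult_2)
  finally show ?thesis by (simp add: mult_2)
qed

lemma sum_even_odd:
  fixes h :: "nat \<Rightarrow> 'a::comm_monoid_add"
  shows "(\<Sum>j=1..2*m. h j) = (\<Sum>i=1..m. h (2*i)) + (\<Sum>i=1..m. h (2*m+1-2*i))"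
proof -
  have "(\<Sum>j=1..2*m. h j) = (\<Sum>i=1..m. h (2*i)) + (\<Sum>i=1..m. h (2*i - 1))"
    by (induction m) (simp_all add: sum.cl_ivl_Suc add_ac)
  also have "(\<Sum>i=1..m. h (2*i - 1)) = (\<Sum>i=1..m. h (2*(m + 1 - i) - 1))"
    by (rule sum.atLeastAtMost_rev)
  also have "\<dots> = (\<Sum>i=1..m. h (2*m+1-2*i))"
    by (rule sum.cong) (auto simp: algebra_simps)
  finally show ?thesis .
qed

lemma sum_refl:
  fixes h :: "nat \<Rightarrow> 'a::comm_monoid_add"
  shows "(\<Sum>j=1..n. h j) = (\<Sum>j=1..n. h (n+1-j))"
  by (rule sum.atLeastAtMost_rev)

lemma prod_split_refl:
  fixes h :: "nat \<Rightarrow> 'a::comm_monoid_mult"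
  shows "(\<Prod>j=1..2*m. h j) = (\<Prod>i=1..m. h i) * (\<Prod>i=1..m. h (2*m+1-i))"
proof -
  have "(\<Prod>j=1..m+m. h j) = (\<Prod>j=1..m. h j) * (\<Prod>j=m+1..m+m. h j)"
    by (rule prod.ub_add_nat) simp
  also have "(\<Prod>j=m+1..m+m. h j) = (\<Prod>k=1..m. h (m + k))"
    using prod.shift_bounds_cl_nat_ivl[of h 1 m m] by (simp add: add.commute)
  also have "\<dots> = (\<Prod>k=1..m. h (m + (m + 1 - k)))"
    by (rule prod.atLeastAtMost_rev)
  also have "\<dots> = (\<Prod>k=1..m. h (2*m+1-k))"
    by (rule prod.cong) (auto simp: mult_2)
  finally show ?thesis by (simp add: mult_2)
qed

lemma prod_even_odd:
  fixes h :: "nat \<Rightarrow> 'a::comm_monoid_mult"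
  shows "(\<Prod>j=1..2*m. h j) = (\<Prod>i=1..m. h (2*i)) * (\<Prod>i=1..m. h (2*m+1-2*i))"
proof -
  have "(\<Prod>j=1..2*m. h j) = (\<Prod>i=1..m. h (2*i)) * (\<Prod>i=1..m. h (2*i - 1))"
    by (induction m) (simp_all add: prod.cl_ivl_Suc mult_ac)
  also have "(\<Prod>i=1..m. h (2*i - 1)) = (\<Prod>i=1..m. h (2*(m + 1 - i) - 1))"
    by (rule prod.atLeastAtMost_rev)
  also have "\<dots> = (\<Prod>i=1..m. h (2*m+1-2*i))"
    by (rule prod.cong) (auto simp: algebra_simps)
  finally show ?thesis .
qed

lemma two_pow_nat: "(\<Prod>j=1..m. 2*m+1-j) = 2^m * (\<Prod>j=1..m. 2*m+1-2*j)"
proof -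
  have f1: "(\<Prod>j=1..2*m. j) = (\<Prod>i=1..m. i) * (\<Prod>i=1..m. 2*m+1-i)"
    by (rule prod_split_refl)
  have f2: "(\<Prod>j=1..2*m. j) = (\<Prod>i=1..m. 2*i) * (\<Prod>i=1..m. 2*m+1-2*i)"
    by (rule prod_even_odd)
  have f3: "(\<Prod>i=1..m. 2*i) = 2^m * (\<Prod>i=1..m. i)"
    by (simp add: prod.distrib)
  have nz: "(\<Prod>i=1..m. i) \<noteq> (0::nat)" by simp
  from f1 f2 f3 have "(\<Prod>i=1..m. i) * (\<Prod>i=1..m. 2*m+1-i) = (\<Prod>i=1..m. i) * (2^m * (\<Prod>i=1..m. 2*m+1-2*i))"
    by (simp add: mult_ac)
  thus ?thesis using nz by simp
qed

definition ff :: "nat \<Rightarrow> rat \<Rightarrow> rat" where "ff m x = (\<Prod>j=1..2*m. x + of_nat j)"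
definition gg :: "nat \<Rightarrow> rat \<Rightarrow> rat" where "gg m x = (\<Prod>j=1..m. x + of_nat j)"

lemma R1: "ff m x = (-1)^m * gg m x * gg m (- x - of_nat (2*m+1))"
proof -
  have "ff m x = gg m x * (\<Prod>i=1..m. x + of_nat (2*m+1-i))"
    unfolding ff_def gg_def by (rule prod_split_refl)
  also have "(\<Prod>i=1..m. x + of_nat (2*m+1-i)) = (\<Prod>i=1..m. - ((- x - of_nat (2*m+1)) + of_nat i))"
    by (rule prod.cong) (auto simp: of_nat_diff)
  also have "\<dots> = (-1)^m * gg m (- x - of_nat (2*m+1))"
    unfolding prod_uminus gg_def by simp
  finally show ?thesis by (simp add: mult_ac)
qed

lemma R2a: "gg m (- of_nat (2*m+1)) = (-1)^m * 2^m * of_nat (\<Prod>j=1..m. 2*m+1-2*j)"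
proof -
  have "gg m (- of_nat (2*m+1)) = (\<Prod>j=1..m. - (of_nat (2*m+1-j) :: rat))"
    unfolding gg_def by (rule prod.cong) (auto simp: of_nat_diff)
  also have "\<dots> = (-1)^m * of_nat (\<Prod>j=1..m. 2*m+1-j)"
    unfolding prod_uminus by simp
  finally show ?thesis unfolding two_pow_nat by simp
qed

lemma R2b: "gg m (- of_nat (2*m+1) / 2) = (-1)^m * of_nat (\<Prod>j=1..m. 2*m+1-2*j) / 2^m"
proof -
  have "gg m (- of_nat (2*m+1) / 2) = (\<Prod>j=1..m. - (of_nat (2*m+1-2*j) :: rat) / 2)"
    unfolding gg_def by (rule prod.cong) (auto simp: of_nat_diff field_simps)
  also have "\<dots> = (\<Prod>j=1..m. - (of_nat (2*m+1-2*j) :: rat)) / 2^m"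
    by (simp add: prod_dividef)
  also have "\<dots> = (-1)^m * of_nat (\<Prod>j=1..m. 2*m+1-2*j) / 2^m"
    unfolding prod_uminus by simp
  finally show ?thesis .
qed

lemma R2: "gg m (- of_nat (2*m+1)) = 2^(2*m) * gg m (- of_nat (2*m+1) / 2)"
  unfolding R2a R2b by (simp add: power_mult power2_eq_square field_simps)

context
  fixes p :: nat
  assumes pr: "prime p" and p3: "p > 3"
begin

lemma pint_int[simp]: "pint p (of_int a)"
  unfolding pint_def
  by (rule exI[of _ a], rule exI[of _ 1]) (use pr in \<open>auto simp: prime_gt_1_nat\<close>)

lemma pint_nat[simp]: "pint p (of_nat a)"
  using pint_int[of "int a"] by simp

lemma pint_numeral[simp]: "pint p (numeral a)"
  using pint_int[of "numeral a"] by simp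

lemma pint_0[simp]: "pint p 0" and pint_1[simp]: "pint p 1"
  using pint_int[of 0] pint_int[of 1] by simp_all

lemma pint_add: "pint p x \<Longrightarrow> pint p y \<Longrightarrow> pint p (x + y)"
proof -
  assume "pint p x" "pint p y"
  then obtain a b c d where ab: "\<not> int p dvd b" "x = of_int a / of_int b"
    and cd: "\<not> int p dvd d" "y = of_int c / of_int d" unfolding pint_def by blast
  have "prime (int p)" using pr by simp
  hence nd: "\<not> int p dvd b * d" using ab cd prime_dvd_mult_iff by blast
  have "b \<noteq> 0" "d \<noteq> 0" using ab cd by auto
  hence "x + y = of_int (a*d + c*b) / of_int (b*d)" using ab cd by (simp add: field_simps)
  thus ?thesis using nd unfolding pint_def by blast
qed

lemma pint_mult: "pint p x \<Longrightarrow> pint p y \<Longrightarrow> pint p (x * y)"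
proof -
  assume "pint p x" "pint p y"
  then obtain a b c d where ab: "\<not> int p dvd b" "x = of_int a / of_int b"
    and cd: "\<not> int p dvd d" "y = of_int c / of_int d" unfolding pint_def by blast
  have "prime (int p)" using pr by simp
  hence nd: "\<not> int p dvd b * d" using ab cd prime_dvd_mult_iff by blast
  have "x * y = of_int (a*c) / of_int (b*d)" using ab cd by (simp add: field_simps)
  thus ?thesis using nd unfolding pint_def by blast
qed

lemma pint_uminus: "pint p x \<Longrightarrow> pint p (- x)"
  using pint_mult[of "-1" x] pint_int[of "-1"] by simp

lemma pint_diff: "pint p x \<Longrightarrow> pint p y \<Longrightarrow> pint p (x - y)"
  using pint_add[of x "-y"] pint_uminus by simp

lemma pint_power: "pint p x \<Longrightarrow> pint p (x ^ n)"
  by (induction n) (auto intro: pint_mult)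

lemma pint_sum: "(\<And>i. i \<in> A \<Longrightarrow> pint p (f i)) \<Longrightarrow> pint p (sum f A)"
  by (induction A rule: infinite_finite_induct) (auto intro: pint_add)

lemma pint_prod: "(\<And>i. i \<in> A \<Longrightarrow> pint p (f i)) \<Longrightarrow> pint p (prod f A)"
  by (induction A rule: infinite_finite_induct) (auto intro: pint_mult)

lemma pint_inv_int: "\<not> int p dvd a \<Longrightarrow> pint p (inverse (of_int a))"
  unfolding pint_def by (rule exI[of _ 1], rule exI[of _ a]) (simp add: divide_inverse)

lemma pint_inv_nat: "\<not> p dvd a \<Longrightarrow> pint p (inverse (of_nat a))"
  using pint_inv_int[of "int a"] by simp

lemma pint_divide_int: "pint p x \<Longrightarrow> \<not> int p dvd a \<Longrightarrow> pint p (x / of_int a)"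
  using pint_mult[OF _ pint_inv_int] by (simp add: divide_inverse)

lemma pint_divide_nat: "pint p x \<Longrightarrow> \<not> p dvd a \<Longrightarrow> pint p (x / of_nat a)"
  using pint_mult[OF _ pint_inv_nat] by (simp add: divide_inverse)

definition "punit x \<longleftrightarrow> x \<noteq> 0 \<and> pint p x \<and> pint p (inverse x)"

lemma punit_mult: "punit x \<Longrightarrow> punit y \<Longrightarrow> punit (x*y)"
  unfolding punit_def by (auto simp: inverse_mult_distrib intro: pint_mult)

lemma punit_inverse: "punit x \<Longrightarrow> punit (inverse x)"
  unfolding punit_def by auto

lemma punit_prod: "(\<And>i. i \<in> A \<Longrightarrow> punit (f i)) \<Longrightarrow> punit (prod f A)"
  by (induction A rule: infinite_finite_induct) (auto simp: punit_def inverse_mult_distrib intro: pint_mult)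

lemma punit_power: "punit x \<Longrightarrow> punit (x ^ n)"
  by (induction n) (auto simp: punit_def inverse_mult_distrib intro: pint_mult)

lemma punit_int: "\<not> int p dvd a \<Longrightarrow> punit (of_int a)"
  unfolding punit_def using pint_inv_int by (cases "a = 0") auto

lemma punit_nat: "\<not> p dvd a \<Longrightarrow> punit (of_nat a)"
  unfolding punit_def using pint_inv_nat by (cases "a = 0") auto

lemma punit_nz: "punit x \<Longrightarrow> x \<noteq> 0"
  unfolding punit_def by simp

lemma pc_refl[simp]: "pc p n x x"
  unfolding pc_def by (rule exI[of _ 0]) simp

lemma pc_sym: "pc p n x y \<Longrightarrow> pc p n y x"
  unfolding pc_def
proof (elim exE conjE)
  fix r assume "pint p r" "x - y = of_nat p ^ n * r"
  thus "\<exists>r. pint p r \<and> y - x = of_nat p ^ n * r"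
    by (intro exI[of _ "-r"]) (auto intro: pint_add pint_diff pint_uminus pint_mult simp: algebra_simps)
qed

lemma pc_trans: "pc p n x y \<Longrightarrow> pc p n y z \<Longrightarrow> pc p n x z"
  unfolding pc_def
proof (elim exE conjE)
  fix r s assume "pint p r" "x - y = of_nat p ^ n * r" "pint p s" "y - z = of_nat p ^ n * s"
  thus "\<exists>r. pint p r \<and> x - z = of_nat p ^ n * r"
    by (intro exI[of _ "r+s"]) (auto intro: pint_add pint_diff pint_uminus pint_mult simp: algebra_simps)
qed

lemma pc_add: "pc p n x y \<Longrightarrow> pc p n u v \<Longrightarrow> pc p n (x+u) (y+v)"
  unfolding pc_def
proof (elim exE conjE)
  fix r s assume "pint p r" "x - y = of_nat p ^ n * r" "pint p s" "u - v = of_nat p ^ n * s"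
  thus "\<exists>r. pint p r \<and> x + u - (y + v) = of_nat p ^ n * r"
    by (intro exI[of _ "r+s"]) (auto intro: pint_add pint_diff pint_uminus pint_mult simp: algebra_simps)
qed

lemma pc_diff: "pc p n x y \<Longrightarrow> pc p n u v \<Longrightarrow> pc p n (x-u) (y-v)"
  unfolding pc_def
proof (elim exE conjE)
  fix r s assume "pint p r" "x - y = of_nat p ^ n * r" "pint p s" "u - v = of_nat p ^ n * s"
  thus "\<exists>r. pint p r \<and> x - u - (y - v) = of_nat p ^ n * r"
    by (intro exI[of _ "r-s"]) (auto intro: pint_add pint_diff pint_uminus pint_mult simp: algebra_simps)
qed

lemma pc_cmult: "pint p c \<Longrightarrow> pc p n x y \<Longrightarrow> pc p n (c*x) (c*y)"
  unfolding pc_def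
proof (elim exE conjE)
  fix r assume "pint p c" "pint p r" "x - y = of_nat p ^ n * r"
  thus "\<exists>r. pint p r \<and> c*x - c*y = of_nat p ^ n * r"
    by (intro exI[of _ "c*r"]) (auto intro: pint_add pint_diff pint_uminus pint_mult simp: algebra_simps simp flip: right_diff_distrib)
qed

lemma pc_mult: "pint p x \<Longrightarrow> pint p v \<Longrightarrow> pc p n x y \<Longrightarrow> pc p n u v \<Longrightarrow> pc p n (x*u) (y*v)"
proof -
  assume a: "pint p x" "pint p v" "pc p n x y" "pc p n u v"
  have "pc p n (x*u) (x*v)" by (rule pc_cmult) (use a in auto)
  moreover have "pc p n (v*x) (v*y)" by (rule pc_cmult) (use a in auto)
  moreover have "v*x = x*v" "v*y = y*v" by (simp_all add: mult.commute)
  ultimately show ?thesis using pc_trans by simp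
qed

lemma pc_weaken: "pc p n x y \<Longrightarrow> k \<le> n \<Longrightarrow> pc p k x y"
  unfolding pc_def
proof (elim exE conjE)
  fix r assume "pint p r" "x - y = of_nat p ^ n * r" "k \<le> n"
  hence "x - y = of_nat p ^ k * (of_nat p ^ (n-k) * r)"
    by (simp add: mult.assoc flip: power_add)
  thus "\<exists>r. pint p r \<and> x - y = of_nat p ^ k * r" using pint_mult[OF pint_power[OF pint_nat[of p]] \<open>pint p r\<close>] by blast
qed

lemma pc_I: "pint p r \<Longrightarrow> x - y = of_nat p ^ n * r \<Longrightarrow> pc p n x y"
  unfolding pc_def by blast

lemma pc_0I: "pint p r \<Longrightarrow> x = of_nat p ^ n * r \<Longrightarrow> pc p n x 0"
  unfolding pc_def by auto

lemma pc_mult_p: "pc p n x y \<Longrightarrow> pc p (n+1) (of_nat p * x) (of_nat p * y)"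
  unfolding pc_def
proof (elim exE conjE)
  fix r assume "pint p r" "x - y = of_nat p ^ n * r"
  thus "\<exists>r. pint p r \<and> of_nat p * x - of_nat p * y = of_nat p ^ (n+1) * r"
    by (intro exI[of _ r]) (auto intro: pint_add pint_diff pint_uminus pint_mult simp: algebra_simps simp flip: right_diff_distrib)
qed

lemma pc_cancel: "punit c \<Longrightarrow> pc p n (c*x) (c*y) \<Longrightarrow> pc p n x y"
  unfolding pc_def
proof (elim exE conjE)
  fix r assume u: "punit c" and r: "pint p r" "c*x - c*y = of_nat p ^ n * r"
  have c0: "c \<noteq> 0" and ic: "pint p (inverse c)" using u unfolding punit_def by auto
  have "x - y = inverse c * (c*x - c*y)" using c0 by (simp add: field_simps)
  also have "\<dots> = of_nat p ^ n * (inverse c * r)" using r(2) by simp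
  finally show "\<exists>r. pint p r \<and> x - y = of_nat p ^ n * r" using pint_mult[OF ic r(1)] by blast
qed

lemma pint_coprime: "pint p r \<Longrightarrow> coprime (snd (quotient_of r)) (int p)"
  unfolding pint_def using coprime_aux[OF pr] by blast


lemma pint_half: "pint p (x / 2)" if "pint p x"
proof -
  have "\<not> p dvd 2" using p3 by (auto dest: dvd_imp_le)
  thus ?thesis using pint_divide_nat[OF that, of 2] by simp
qed

lemma expand:
  fixes n :: nat and c :: "nat \<Rightarrow> rat"
  assumes "\<forall>j\<in>{1..n}. punit (c j)" "pint p x"
  shows "\<exists>R. pint p R \<and> (\<Prod>j=1..n. x + c j) = (\<Prod>j=1..n. c j) *
     (1 + (\<Sum>j=1..n. inverse (c j)) * x +
      (((\<Sum>j=1..n. inverse (c j)))^2 - (\<Sum>j=1..n. inverse (c j)^2)) / 2 * x^2) + x^3 * R"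
  using assms(1)
proof (induction n)
  case 0
  show ?case by (intro exI[of _ 0]) simp
next
  case (Suc n)
  define E where "E = (\<Prod>j=1..n. c j)"
  define s1 where "s1 = (\<Sum>j=1..n. inverse (c j))"
  define s2 where "s2 = (\<Sum>j=1..n. inverse (c j)^2)"
  define cc where "cc = c (Suc n)"
  have u: "\<forall>j\<in>{1..n}. punit (c j)" using Suc.prems by auto
  obtain R where R: "pint p R" "(\<Prod>j=1..n. x + c j) = E * (1 + s1 * x + (s1^2 - s2)/2 * x^2) + x^3 * R"
    using Suc.IH[OF u] unfolding E_def s1_def s2_def by blast
  have ucc: "punit cc" using Suc.prems unfolding cc_def by auto
  hence cc0: "cc \<noteq> 0" and pcc: "pint p cc" unfolding punit_def by auto
  have pE: "pint p E" unfolding E_def using u by (intro pint_prod) (auto simp: punit_def)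
  have ps1: "pint p s1" unfolding s1_def using u by (intro pint_sum) (auto simp: punit_def)
  have ps2: "pint p s2" unfolding s2_def using u by (intro pint_sum pint_power) (auto simp: punit_def)
  define A where "A = (s1^2 - s2)/2"
  have pA: "pint p A" unfolding A_def by (intro pint_half pint_diff pint_power ps1 ps2)
  define R' where "R' = E * A + (x + cc) * R"
  have pR': "pint p R'" unfolding R'_def
    by (intro pint_add pint_mult pE pA assms(2) pcc R(1))
  have P: "(\<Prod>j=1..Suc n. x + c j) = (\<Prod>j=1..n. x + c j) * (x + cc)"
    unfolding cc_def by (simp add: prod.cl_ivl_Suc)
  have EE: "(\<Prod>j=1..Suc n. c j) = E * cc" unfolding E_def cc_def by (simp add: prod.cl_ivl_Suc)
  have S1: "(\<Sum>j=1..Suc n. inverse (c j)) = s1 + inverse cc" unfolding s1_def cc_def by (simp add: sum.cl_ivl_Suc)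
  have S2: "(\<Sum>j=1..Suc n. inverse (c j)^2) = s2 + inverse cc^2" unfolding s2_def cc_def by (simp add: sum.cl_ivl_Suc)
  have "(\<Prod>j=1..Suc n. x + c j) = (E * cc) * (1 + (s1 + inverse cc) * x + ((s1 + inverse cc)^2 - (s2 + inverse cc^2))/2 * x^2) + x^3 * R'"
    unfolding P R(2) R'_def using cc0 unfolding A_def by (simp add: field_simps power2_eq_square power3_eq_cube)
  thus ?case unfolding EE S1 S2 using pR' by blast
qed

lemma ndvd_small: "0 < e \<Longrightarrow> e < p \<Longrightarrow> \<not> p dvd e"
  by (auto dest: dvd_imp_le)

lemma pc_sum: "(\<And>i. i \<in> A \<Longrightarrow> pc p n (f i) (g i)) \<Longrightarrow> pc p n (sum f A) (sum g A)"
  by (induction A rule: infinite_finite_induct) (auto intro: pc_add)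

lemma refl_sq: assumes "0 < e" "e < p"
  shows "pc p 1 (inverse (of_nat (p - e))^2) (inverse (of_nat e)^2)"
proof -
  define E Q where "E = (of_nat e :: rat)" and "Q = (of_nat p :: rat)"
  have ue: "punit E" unfolding E_def using punit_nat ndvd_small assms by blast
  have uq: "punit (of_nat (p - e))" by (rule punit_nat, rule ndvd_small) (use assms in auto)
  have qe: "(of_nat (p - e) :: rat) = Q - E" unfolding Q_def E_def using assms by (simp add: of_nat_diff)
  have E0: "E \<noteq> 0" and QE0: "Q - E \<noteq> 0" using ue uq qe punit_nz[of 0] by auto
  have pr: "pint p ((2*E - Q) * inverse E ^ 2 * inverse (Q-E) ^ 2)"
    using ue uq qe unfolding punit_def Q_def
    by (intro pint_mult pint_power pint_diff) auto
  define D where "D = Q - E"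
  have QD: "Q = D + E" unfolding D_def by simp
  have D0: "D \<noteq> 0" using QE0 unfolding D_def .
  have "inverse D^2 - inverse E^2 = (D+E) * ((2*E - (D+E)) * inverse E ^ 2 * inverse D ^ 2)"
    using D0 E0 by (simp add: field_simps power2_eq_square)
  hence "inverse (of_nat (p - e))^2 - inverse (of_nat e)^2 = of_nat p ^ 1 * ((2*E - Q) * inverse E ^ 2 * inverse (Q-E) ^ 2)"
    unfolding qe by (simp add: D_def flip: E_def Q_def)
  thus ?thesis using pc_I[OF pr] by blast
qed

lemma refl_lin: assumes "0 < e" "e < p"
  shows "pc p 1 (inverse (of_nat e * of_nat (p - e))) (- (inverse (of_nat e)^2))"
proof -
  define E Q where "E = (of_nat e :: rat)" and "Q = (of_nat p :: rat)"
  have ue: "punit E" unfolding E_def using punit_nat ndvd_small assms by blast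
  have uq: "punit (of_nat (p - e))" by (rule punit_nat, rule ndvd_small) (use assms in auto)
  have qe: "(of_nat (p - e) :: rat) = Q - E" unfolding Q_def E_def using assms by (simp add: of_nat_diff)
  have E0: "E \<noteq> 0" and QE0: "Q - E \<noteq> 0" using ue uq qe punit_nz[of 0] by auto
  have pr: "pint p (inverse E ^ 2 * inverse (Q-E))"
    using ue uq qe unfolding punit_def Q_def
    by (intro pint_mult pint_power) auto
  define D where "D = Q - E"
  have QD: "Q = D + E" unfolding D_def by simp
  have D0: "D \<noteq> 0" using QE0 unfolding D_def .
  have "inverse (E * D) - - (inverse E^2) = (D+E) * (inverse E ^ 2 * inverse D)"
    using D0 E0 by (simp add: field_simps power2_eq_square)
  hence "inverse (of_nat e * of_nat (p - e)) - - (inverse (of_nat e)^2) = of_nat p ^ 1 * (inverse E ^ 2 * inverse (Q-E))"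
    unfolding qe by (simp add: D_def flip: E_def Q_def)
  thus ?thesis using pc_I[OF pr] by blast
qed

lemma pc_E: "pc p n x y \<Longrightarrow> \<exists>r. pint p r \<and> x - y = of_nat p ^ n * r"
  unfolding pc_def by blast

lemma ndvd3: "\<not> p dvd 3" and ndvd2: "\<not> p dvd 2"
  using p3 by (auto dest: dvd_imp_le)

lemma wolst_sq: assumes mp: "p = 2*m+1"
  shows "pc p 1 (\<Sum>j=1..2*m. inverse (of_nat j :: rat)^2) 0"
proof -
  define h where "h j = inverse (of_nat j :: rat)^2" for j
  define T where "T = (\<Sum>i=1..m. h i)"
  define S where "S = (\<Sum>j=1..2*m. h j)"
  have hr: "pc p 1 (h (2*m+1-i)) (h i)" if "0<i" "i<p" for i
    using refl_sq[OF that] mp unfolding h_def by simp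
  have pT: "pint p T" unfolding T_def h_def
    by (intro pint_sum pint_power pint_inv_nat ndvd_small) (use mp in auto)
  have Seq1: "S = T + (\<Sum>i=1..m. h (2*m+1-i))" unfolding S_def T_def by (rule sum_split_refl)
  have X1: "pc p 1 (\<Sum>i=1..m. h (2*m+1-i)) T" unfolding T_def
    by (rule pc_sum, rule hr) (use mp in auto)
  have "pc p 1 (T + (\<Sum>i=1..m. h (2*m+1-i))) (T + T)" by (rule pc_add[OF pc_refl X1])
  hence S2T: "pc p 1 S (2*T)" unfolding Seq1 mult_2 .
  have Seq2: "S = (\<Sum>i=1..m. h (2*i)) + (\<Sum>i=1..m. h (2*m+1-2*i))" unfolding S_def by (rule sum_even_odd)
  have X2: "pc p 1 (\<Sum>i=1..m. h (2*m+1-2*i)) (\<Sum>i=1..m. h (2*i))"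
    by (rule pc_sum, rule hr) (use mp in auto)
  have h2: "h (2*i) = h i / 4" for i
    unfolding h_def by (simp add: power_mult_distrib inverse_mult_distrib power_divide)
  have T4: "(\<Sum>i=1..m. h (2*i)) = T / 4" unfolding T_def h2 by (rule sum_divide_distrib[symmetric])
  have "pc p 1 (T/4 + (\<Sum>i=1..m. h (2*m+1-2*i))) (T/4 + T/4)"
    using pc_add[OF pc_refl X2] unfolding T4 .
  moreover have "S = T/4 + (\<Sum>i=1..m. h (2*m+1-2*i))" using Seq2 T4 by simp
  moreover have "T/4 + T/4 = T/2" by simp
  ultimately have ST2: "pc p 1 S (T/2)" by simp
  have "pc p 1 (2*T) (T/2)" using pc_trans[OF pc_sym[OF S2T] ST2] .
  then obtain r where r: "pint p r" "2*T - T/2 = of_nat p ^ 1 * r" using pc_E by blast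
  have "T - 0 = of_nat p ^ 1 * (2 * r / of_nat 3)" using r(2) by (simp add: field_simps)
  moreover have "pint p (2 * r / of_nat 3)" by (intro pint_divide_nat pint_mult r(1) ndvd3) simp
  ultimately have T0: "pc p 1 T 0" using pc_I by blast
  have "pc p 1 (2*T) (2*0)" by (rule pc_cmult[OF _ T0]) simp
  hence "pc p 1 S 0" using pc_trans[OF S2T] by simp
  thus ?thesis unfolding S_def h_def .
qed

lemma pair_inv: assumes "0 < j" "j < p"
  shows "inverse (of_nat j) + inverse (of_nat (p - j)) = of_nat p * inverse (of_nat j * of_nat (p - j) :: rat)"
proof -
  define J D where "J = (of_nat j :: rat)" and "D = (of_nat (p - j) :: rat)"
  have Q: "(of_nat p :: rat) = D + J" unfolding D_def J_def using assms by (simp add: of_nat_diff)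
  have "J \<noteq> 0" "D \<noteq> 0" unfolding J_def D_def using assms by auto
  hence "inverse J + inverse D = (D + J) * inverse (J * D)" by (simp add: field_simps)
  thus ?thesis unfolding Q by (simp flip: J_def D_def)
qed

lemma wolst_lin: assumes mp: "p = 2*m+1"
  shows "pc p 2 (\<Sum>j=1..2*m. inverse (of_nat j :: rat)) 0"
proof -
  define S1 where "S1 = (\<Sum>j=1..2*m. inverse (of_nat j :: rat))"
  define K where "K = (\<Sum>j=1..2*m. inverse (of_nat j * of_nat (p - j) :: rat))"
  have S1r: "S1 = (\<Sum>j=1..2*m. inverse (of_nat (p - j) :: rat))" unfolding S1_def mp by (rule sum_refl)
  have "2 * S1 = S1 + S1" by simp
  also have "\<dots> = (\<Sum>j=1..2*m. inverse (of_nat j :: rat)) + (\<Sum>j=1..2*m. inverse (of_nat (p - j) :: rat))"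
    using S1r S1_def by simp
  also have "\<dots> = (\<Sum>j=1..2*m. inverse (of_nat j) + inverse (of_nat (p-j) :: rat))"
    by (simp only: sum.distrib)
  also have "\<dots> = (\<Sum>j=1..2*m. of_nat p * inverse (of_nat j * of_nat (p - j) :: rat))"
    by (rule sum.cong, simp, rule pair_inv) (use mp in auto)
  finally have S1K: "2 * S1 = of_nat p * K" unfolding K_def by (simp add: sum_distrib_left)
  have "pc p 1 K (\<Sum>j=1..2*m. - (inverse (of_nat j)^2))" unfolding K_def
    by (rule pc_sum, rule refl_lin) (use mp in auto)
  moreover have "(\<Sum>j=1..2*m. - (inverse (of_nat j :: rat)^2)) = - (\<Sum>j=1..2*m. inverse (of_nat j :: rat)^2)"
    by (simp add: sum_negf)
  moreover have "pc p 1 (- (\<Sum>j=1..2*m. inverse (of_nat j :: rat)^2)) (- 1 * 0)"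
    using pc_cmult[OF _ wolst_sq[OF mp], of "-1"] pint_int[of "-1"] by simp
  ultimately have "pc p 1 K 0" using pc_trans[of 1 K] by simp
  then obtain r where r: "pint p r" "K - 0 = of_nat p ^ 1 * r" using pc_E by blast
  have "S1 - 0 = of_nat p ^ 2 * (r / of_nat 2)" using S1K r(2) by (simp add: field_simps power2_eq_square)
  moreover have "pint p (r / of_nat 2)" by (intro pint_divide_nat r(1) ndvd2)
  ultimately show ?thesis unfolding S1_def using pc_I by blast
qed

lemma F_cong: assumes mp: "p = 2*m+1" and y: "pint p y"
  shows "pc p 3 (ff m (of_nat p * y)) (ff m 0)"
proof -
  define x where "x = of_nat p * y"
  have px: "pint p x" unfolding x_def by (intro pint_mult y) simp
  have u: "\<forall>j\<in>{1..2*m}. punit (of_nat j :: rat)"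
  proof
    fix j assume "j \<in> {1..2*m}"
    thus "punit (of_nat j)" by (intro punit_nat ndvd_small) (use mp in auto)
  qed
  obtain R where R: "pint p R" "(\<Prod>j=1..2*m. x + of_nat j) = (\<Prod>j=1..2*m. of_nat j) *
     (1 + (\<Sum>j=1..2*m. inverse (of_nat j)) * x +
      (((\<Sum>j=1..2*m. inverse (of_nat j)))^2 - (\<Sum>j=1..2*m. inverse (of_nat j)^2)) / 2 * x^2) + x^3 * R"
    using expand[OF u px] by blast
  define E where "E = (\<Prod>j=1..2*m. of_nat j :: rat)"
  obtain r1 where r1: "pint p r1" "(\<Sum>j=1..2*m. inverse (of_nat j :: rat)) - 0 = of_nat p ^ 2 * r1"
    using pc_E[OF wolst_lin[OF mp]] by blast
  obtain r2 where r2: "pint p r2" "(\<Sum>j=1..2*m. inverse (of_nat j :: rat)^2) - 0 = of_nat p ^ 1 * r2"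
    using pc_E[OF wolst_sq[OF mp]] by blast
  have pE: "pint p E" unfolding E_def by (intro pint_prod) simp
  have e0: "ff m 0 = E" unfolding ff_def E_def by simp
  have "ff m x - ff m 0 = E * (of_nat p ^ 2 * r1 * x + ((of_nat p ^ 2 * r1)^2 - of_nat p * r2) / 2 * x^2) + x^3 * R"
    using R(2) r1(2) r2(2) unfolding e0 ff_def E_def by (simp add: algebra_simps)
  also have "\<dots> = of_nat p ^ 3 * (E * (r1 * y + (of_nat p ^ 3 * r1^2 - r2) / 2 * y^2) + y^3 * R)"
    unfolding x_def by (simp add: field_simps power2_eq_square power3_eq_cube)
  finally have "ff m x - ff m 0 = of_nat p ^ 3 * (E * (r1 * y + (of_nat p ^ 3 * r1^2 - r2) / 2 * y^2) + y^3 * R)" .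
  moreover have "pint p (E * (r1 * y + (of_nat p ^ 3 * r1^2 - r2) / 2 * y^2) + y^3 * R)"
    by (intro pint_add pint_mult pint_half pint_diff pint_power pE r1(1) r2(1) y R(1) pint_nat)
  ultimately show ?thesis unfolding x_def by (rule pc_I[rotated])
qed

lemma G_cong: assumes mp: "p = 2*m+1" and y: "pint p y"
  shows "\<exists>R. pint p R \<and> gg m (of_nat p * y) = gg m 0 * (1 + (\<Sum>j=1..m. inverse (of_nat j)) * (of_nat p * y) +
      (((\<Sum>j=1..m. inverse (of_nat j)))^2 - (\<Sum>j=1..m. inverse (of_nat j)^2)) / 2 * (of_nat p * y)^2) + of_nat p ^ 3 * y^3 * R"
proof -
  define x where "x = of_nat p * y"
  have px: "pint p x" unfolding x_def by (intro pint_mult y) simp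
  have u: "\<forall>j\<in>{1..m}. punit (of_nat j :: rat)"
  proof
    fix j assume "j \<in> {1..m}"
    thus "punit (of_nat j)" by (intro punit_nat ndvd_small) (use mp in auto)
  qed
  obtain R where R: "pint p R" "(\<Prod>j=1..m. x + of_nat j) = (\<Prod>j=1..m. of_nat j) *
     (1 + (\<Sum>j=1..m. inverse (of_nat j)) * x +
      (((\<Sum>j=1..m. inverse (of_nat j)))^2 - (\<Sum>j=1..m. inverse (of_nat j)^2)) / 2 * x^2) + x^3 * R"
    using expand[OF u px] by blast
  have "x^3 * R = of_nat p ^ 3 * y^3 * R" unfolding x_def by (simp add: power_mult_distrib)
  thus ?thesis using R unfolding gg_def x_def by auto
qed

lemma punit_gh: assumes mp: "p = 2*m+1"
  shows "punit (gg m (- of_nat (2*m+1) / 2))"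
proof -
  have a: "punit ((-1) ^ m)" using punit_power[OF punit_int[of "-1"]] p3 by simp
  have b: "punit (of_nat (\<Prod>j=1..m. 2*m+1-2*j))"
    unfolding of_nat_prod
  proof (rule punit_prod)
    fix j assume "j \<in> {1..m}"
    thus "punit (of_nat (2*m+1-2*j))" by (intro punit_nat ndvd_small) (use mp in auto)
  qed
  have c: "punit (inverse (2 ^ m))" using punit_inverse[OF punit_power[OF punit_nat[OF ndvd2]]] by simp
  show ?thesis unfolding R2b by (unfold divide_inverse) (intro punit_mult a b c)
qed

lemma punit_gg0: assumes mp: "p = 2*m+1" shows "punit (gg m 0)"
  unfolding gg_def
proof (rule punit_prod)
  fix j assume "j \<in> {1..m}"
  thus "punit (0 + of_nat j)" using punit_nat ndvd_small mp by simp
qed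

lemma punit_ff0: assumes mp: "p = 2*m+1" shows "punit (ff m 0)"
  unfolding ff_def
proof (rule punit_prod)
  fix j assume "j \<in> {1..2*m}"
  thus "punit (0 + of_nat j)" using punit_nat ndvd_small mp by simp
qed

lemma punit_g2: assumes mp: "p = 2*m+1" shows "punit (gg m (of_nat p * 2))"
  unfolding gg_def
proof (rule punit_prod)
  fix j assume j: "j \<in> {1..m}"
  have "\<not> p dvd (2*p + j)"
  proof
    assume "p dvd 2*p + j"
    hence "p dvd j" by (simp add: dvd_add_right_iff)
    thus False using ndvd_small[of j] j mp by auto
  qed
  hence "punit (of_nat (2*p + j))" by (rule punit_nat)
  thus "punit (of_nat p * 2 + of_nat j)" by (simp add: mult.commute)
qed

lemma H2_cong: assumes mp: "p = 2*m+1"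
  shows "pc p 3 (gg m (of_nat p * 2)) (gg m 0 * (15 - 24 * 2^(2*m) + 10 * (2^(2*m))^2))"
proof -
  define E S A where "E = gg m 0" and "S = (\<Sum>j=1..m. inverse (of_nat j :: rat))"
    and "A = (((\<Sum>j=1..m. inverse (of_nat j :: rat)))^2 - (\<Sum>j=1..m. inverse (of_nat j :: rat)^2)) / 2"
  define t :: rat where "t = 2^(2*m)"
  define Q :: rat where "Q = of_nat p"
  define g2 gh g1 where "g2 = gg m (Q * 2)" and "gh = gg m (Q * (-1/2))" and "g1 = gg m (Q * (-1))"
  obtain R2 where X2: "pint p R2" "g2 = E * (1 + S * (Q * 2) + A * (Q * 2)^2) + Q ^ 3 * 2^3 * R2"
    using G_cong[OF mp, of 2] unfolding g2_def E_def S_def A_def Q_def by auto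
  obtain Rh where Xh: "pint p Rh" "gh = E * (1 + S * (Q * (-1/2)) + A * (Q * (-1/2))^2) + Q ^ 3 * (-1/2)^3 * Rh"
    using G_cong[OF mp, of "-1/2"] pint_divide_nat[OF pint_int[of "-1"] ndvd2]
    unfolding gh_def E_def S_def A_def Q_def by auto
  obtain R1 where X1: "pint p R1" "g1 = E * (1 + S * (Q * (-1)) + A * (Q * (-1))^2) + Q ^ 3 * (-1)^3 * R1"
    using G_cong[OF mp, of "-1"] pint_int[of "-1"] unfolding g1_def E_def S_def A_def Q_def by auto
  have "g2 - (15 * E - 24 * gh + 10 * g1) = Q ^ 3 * (8 * R2 - 3 * Rh + 10 * R1)"
    unfolding X2(2) Xh(2) X1(2) by (simp add: algebra_simps power2_eq_square power3_eq_cube)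
  hence L1: "pc p 3 g2 (15 * E - 24 * gh + 10 * g1)"
    unfolding Q_def by (rule pc_I[rotated]) (intro pint_add pint_diff pint_mult X2(1) Xh(1) X1(1) pint_numeral)
  have ghx: "gh = gg m (- of_nat (2*m+1) / 2)" unfolding gh_def Q_def mp by (rule arg_cong[where f="gg m"]) (simp add: field_simps)
  have g1x: "g1 = gg m (- of_nat (2*m+1))" unfolding g1_def Q_def mp by simp
  have g1t: "g1 = t * gh" unfolding g1x ghx t_def by (rule R2)
  have uh: "punit gh" unfolding ghx by (rule punit_gh[OF mp])
  have FC: "pc p 3 (ff m (of_nat p * (-1/2))) (ff m 0)"
    by (rule F_cong[OF mp]) (use pint_divide_nat[OF pint_int[of "-1"] ndvd2] in simp)
  have f1: "ff m (of_nat p * (-1/2)) = (-1)^m * (gh * gh)"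
  proof -
    have e: "- (of_nat p * (-1/2)) - of_nat (2*m+1) = (of_nat p * (-1/2) :: rat)" unfolding mp by (simp add: field_simps)
    have "ff m (of_nat p * (-1/2)) = (-1)^m * gg m (of_nat p*(-1/2)) * gg m (of_nat p*(-1/2))"
      using R1[of m "of_nat p * (-1/2)"] unfolding e .
    thus ?thesis unfolding gh_def Q_def by (simp add: mult_ac)
  qed
  have f0: "ff m 0 = (-1)^m * (gh * (E * t))"
  proof -
    have "ff m 0 = (-1)^m * E * g1" unfolding R1 E_def g1x by simp
    thus ?thesis unfolding g1t by (simp add: mult_ac)
  qed
  have "pc p 3 ((-1)^m * ((-1)^m * (gh * gh))) ((-1)^m * ((-1)^m * (gh * (E * t))))"
    using pc_cmult[OF _ FC[unfolded f1 f0], of "(-1)^m"] pint_power[OF pint_int[of "-1"]] by simp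
  hence "pc p 3 (gh * gh) (gh * (E * t))" by (simp flip: mult.assoc power_mult_distrib)
  hence ghc: "pc p 3 gh (E * t)" by (rule pc_cancel[OF uh])
  have pt: "pint p t" unfolding t_def using pint_power[OF pint_nat[of 2]] by simp
  have g1c: "pc p 3 g1 (t * (E * t))" unfolding g1t by (rule pc_cmult[OF pt ghc])
  have "pc p 3 (15 * E - 24 * gh + 10 * g1) (15 * E - 24 * (E * t) + 10 * (t * (E * t)))"
    by (intro pc_add pc_diff pc_refl pc_cmult[OF pint_numeral] ghc g1c)
  from pc_trans[OF L1 this]
  show ?thesis unfolding g2_def E_def Q_def t_def by (simp add: algebra_simps power2_eq_square)
qed

lemma fact_shift: "fact (n + r) = (fact n :: rat) * (\<Prod>j=1..r. of_nat (n + j))"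
  by (induction r) (simp_all add: prod.cl_ivl_Suc algebra_simps)

lemma fact_ff: "fact (n + 2*m) = (fact n :: rat) * ff m (of_nat n)"
  unfolding fact_shift ff_def by simp

lemma fact_gg: "fact (n + m) = (fact n :: rat) * gg m (of_nat n)"
  unfolding fact_shift gg_def by simp

lemma Gform:
  assumes mp: "p = 2*m+1"
  shows "G p ((p + 1) div 2) = (-1)^m * of_nat p * 3 * (ff m (of_nat p * 1) * ff m (of_nat p * 2) * ff m (of_nat p * 3) * ff m (of_nat p * 4)) * gg m 0
     / (ff m 0 ^ 4 * gg m (of_nat p * 2) * (2^(2*m))^9)"
proof -
  define P :: rat where "P = of_nat p"
  define W0 W1 W2 W3 W4 where "W0 = ff m 0" and "W1 = ff m (P * 1)" and "W2 = ff m (P * 2)"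
    and "W3 = ff m (P * 3)" and "W4 = ff m (P * 4)"
  define E H where "E = gg m 0" and "H = gg m (P * 2)"
  have k: "(p + 1) div 2 = m + 1" using mp by simp
  have F2m: "(fact (2*m) :: rat) = W0" using fact_ff[of 0 m] unfolding W0_def by simp
  have Fp: "(fact p :: rat) = P * W0"
  proof -
    have "p = Suc (2*m)" using mp by simp
    hence "fact p = of_nat p * (fact (2*m) :: rat)" by (simp only: fact_Suc)
    thus ?thesis unfolding F2m P_def .
  qed
  have F4m1: "(fact (4*m+1) :: rat) = P * W0 * W1"
  proof -
    have eq: "4*m+1 = p + 2*m" using mp by simp
    have "fact (4*m+1) = (fact p :: rat) * ff m (of_nat p)" unfolding eq by (rule fact_ff)
    thus ?thesis unfolding Fp W1_def P_def by simp
  qed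
  have F2p: "(fact (2*p) :: rat) = 2 * P^2 * W0 * W1"
  proof -
    have "2*p = Suc (4*m+1)" using mp by simp
    hence "fact (2*p) = of_nat (2*p) * (fact (4*m+1) :: rat)" by (simp only: fact_Suc)
    thus ?thesis unfolding F4m1 P_def by (simp add: power2_eq_square mult_ac)
  qed
  have F3p: "(fact (3*p) :: rat) = 6 * P^3 * W0 * W1 * W2"
  proof -
    have "fact (2*p + 2*m) = (fact (2*p) :: rat) * W2" using fact_ff[of "2*p" m] unfolding W2_def P_def by (simp add: mult_ac)
    moreover have "3*p = Suc (2*p + 2*m)" using mp by simp
    ultimately have "fact (3*p) = of_nat (3*p) * ((fact (2*p) :: rat) * W2)" by (simp only: fact_Suc)
    thus ?thesis unfolding F2p P_def by (simp add: power2_eq_square power3_eq_cube mult_ac)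
  qed
  have F4p: "(fact (4*p) :: rat) = 24 * P^4 * W0 * W1 * W2 * W3"
  proof -
    have "fact (3*p + 2*m) = (fact (3*p) :: rat) * W3" using fact_ff[of "3*p" m] unfolding W3_def P_def by (simp add: mult_ac)
    moreover have "4*p = Suc (3*p + 2*m)" using mp by simp
    ultimately have "fact (4*p) = of_nat (4*p) * ((fact (3*p) :: rat) * W3)" by (simp only: fact_Suc)
    thus ?thesis unfolding F3p P_def by (simp add: power_numeral_reduce mult_ac)
  qed
  have F10: "(fact (10*m+4) :: rat) = 24 * P^4 * W0 * W1 * W2 * W3 * W4"
  proof -
    have "fact (4*p + 2*m) = (fact (4*p) :: rat) * W4" using fact_ff[of "4*p" m] unfolding W4_def P_def by (simp add: mult_ac)
    moreover have "4*p + 2*m = 10*m+4" using mp by simp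
    ultimately show ?thesis unfolding F4p by simp
  qed
  have F5: "(fact (5*m+2) :: rat) = 2 * P^2 * W0 * W1 * H"
  proof -
    have "fact (2*p + m) = (fact (2*p) :: rat) * H" using fact_gg[of "2*p" m] unfolding H_def P_def by (simp add: mult_ac)
    moreover have "2*p + m = 5*m+2" using mp by simp
    ultimately show ?thesis unfolding F2p by simp
  qed
  have Fm: "(fact m :: rat) = E" using fact_gg[of 0 m] unfolding E_def by simp
  have Fm1: "(fact (m+1) :: rat) = (of_nat m + 1) * E" using Fm by simp
  have F2m2: "(fact (2*m+2) :: rat) = 2 * (of_nat m + 1) * P * W0"
  proof -
    have "2*m+2 = Suc p" using mp by simp
    hence "fact (2*m+2) = of_nat (Suc p) * (fact p :: rat)" by (simp only: fact_Suc)
    hence "fact (2*m+2) = (of_nat p + 1) * (P * W0)" unfolding Fp by simp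
    moreover have "(of_nat p + 1 :: rat) = 2 * (of_nat m + 1)" using mp by simp
    ultimately show ?thesis by (simp add: mult_ac)
  qed
  have nz: "W0 \<noteq> 0" "W1 \<noteq> 0" "W2 \<noteq> 0" "W3 \<noteq> 0" "W4 \<noteq> 0" "E \<noteq> 0" "H \<noteq> 0" "P \<noteq> 0"
    "(fact (3*m) :: rat) \<noteq> 0" "(of_nat m + 1 :: rat) \<noteq> 0"
    unfolding W0_def W1_def W2_def W3_def W4_def E_def H_def ff_def gg_def P_def mp
    by (auto simp: prod_zero_iff add_eq_0_iff2)
  have B1: "of_nat ((2*p - 1) choose (p - 1)) = (fact (4*m+1) / (fact (2*m) * fact (2*m+1)) :: rat)"
  proof -
    have e: "2*p - 1 = 4*m+1" "p - 1 = 2*m" "4*m+1 - 2*m = 2*m+1" using mp by auto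
    have "of_nat ((4*m+1) choose (2*m)) = (fact (4*m+1) / (fact (2*m) * fact (4*m+1 - 2*m)) :: rat)"
      by (rule binomial_fact) simp
    thus ?thesis by (simp only: e)
  qed
  have B2: "of_nat ((4*p + 2*(m+1) - 2) choose (2*p + (m+1) - 1)) = (fact (10*m+4) / (fact (5*m+2) * fact (5*m+2)) :: rat)"
  proof -
    have e: "4*p + 2*(m+1) - 2 = 10*m+4" "2*p + (m+1) - 1 = 5*m+2" "10*m+4 - (5*m+2) = 5*m+2" using mp by auto
    have "of_nat ((10*m+4) choose (5*m+2)) = (fact (10*m+4) / (fact (5*m+2) * fact (10*m+4 - (5*m+2))) :: rat)"
      by (rule binomial_fact) simp
    thus ?thesis by (simp only: e)
  qed
  have B3: "of_nat ((2*p - (m+1) - 1) choose (p - 1)) = (fact (3*m) / (fact (2*m) * fact m) :: rat)"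
  proof -
    have e: "2*p - (m+1) - 1 = 3*m" "p - 1 = 2*m" "3*m - 2*m = m" using mp by auto
    have "of_nat ((3*m) choose (2*m)) = (fact (3*m) / (fact (2*m) * fact (3*m - 2*m)) :: rat)"
      by (rule binomial_fact) simp
    thus ?thesis by (simp only: e)
  qed
  have B4: "of_nat ((2*p + (m+1) - 1) choose (2*(m+1))) = (fact (5*m+2) / (fact (2*m+2) * fact (3*m)) :: rat)"
  proof -
    have e: "2*p + (m+1) - 1 = 5*m+2" "2*(m+1) = 2*m+2" "5*m+2 - (2*m+2) = 3*m" using mp by auto
    have "of_nat ((5*m+2) choose (2*m+2)) = (fact (5*m+2) / (fact (2*m+2) * fact (5*m+2 - (2*m+2))) :: rat)"
      by (rule binomial_fact) simp
    thus ?thesis by (simp only: e)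
  qed
  have B5: "of_nat ((2*(m+1)) choose (m+1)) = (fact (2*m+2) / (fact (m+1) * fact (m+1)) :: rat)"
  proof -
    have e: "2*(m+1) - (m+1) = m+1" "2*(m+1) = 2*m+2" "2*m+2 - (m+1) = m+1" by auto
    have "of_nat ((2*(m+1)) choose (m+1)) = (fact (2*(m+1)) / (fact (m+1) * fact (2*(m+1) - (m+1))) :: rat)"
      by (rule binomial_fact) simp
    thus ?thesis by (simp only: e)
  qed
  have e4: "(4::rat) ^ (5*p - (m+1) - 4) = (2^(2*m))^9"
  proof -
    have "5*p - (m+1) - 4 = 2*m*9 div 2" using mp by simp
    hence "5*p - (m+1) - 4 = m*9" by simp
    moreover have "(2::rat)^(2*m) = 4^m" by (simp add: power_mult)
    ultimately show ?thesis by (simp add: power_mult)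
  qed
  have sg: "(-1::rat) ^ (p + (m+1)) = (-1)^m"
  proof -
    have "p + (m+1) = 2*(m+1) + m" using mp by simp
    thus ?thesis by (simp add: power_add power_mult)
  qed
  have F2m1: "(fact (2*m+1) :: rat) = P * W0" using Fp mp by simp
  define M X T where "M = (of_nat m + 1 :: rat)" and "X = (fact (3*m) :: rat)" and "T = (2::rat)^(2*m)"
  have nz2: "M \<noteq> 0" "X \<noteq> 0" "T \<noteq> 0" unfolding M_def X_def T_def using nz by auto
  have "G p ((p + 1) div 2) = (-1)^m * (P * (P*W0*W1/(W0*(P*W0))) * (24*P^4*W0*W1*W2*W3*W4/((2*P^2*W0*W1*H)*(2*P^2*W0*W1*H)))
      * (X/(W0*E)) * ((2*P^2*W0*W1*H)/((2*M*P*W0)*X))) / (T^9 * ((2*M*P*W0)/((M*E)*(M*E))))"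
    unfolding G_def k B1 B2 B3 B4 B5 e4 sg
    unfolding F4m1 F2m F2m1 F10 F5 Fm F2m2 Fm1
    unfolding P_def[symmetric] M_def[symmetric] X_def[symmetric] T_def[symmetric] ..
  also have "\<dots> = (-1)^m * P * 3 * (W1 * W2 * W3 * W4) * E / (W0 ^ 4 * H * T^9)"
    using nz nz2 by (simp add: field_simps power2_eq_square power3_eq_cube power4_eq_xxxx)
  finally show ?thesis unfolding P_def W0_def W1_def W2_def W3_def W4_def E_def H_def T_def .
qed


lemma poly_id: "(15 - 24*T + 10*T^2) * T^9 * (1 - 5*(T-1) + 15*(T-1)^2) =
  1 + (T-1)^3 * (1 + 3*T + 6*T^2 + 10*T^3 + 15*T^4 + 21*T^5 + 28*T^6 + 36*T^7 + 45*T^8 - 260*T^9 + 150*T^10 :: rat)"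
  by (Groebner_Basis.algebra)

lemma pint_ff: "pint p y \<Longrightarrow> pint p (ff m y)"
  unfolding ff_def using pr p3 by (intro pint_prod pint_add) auto

lemma main_pc:
  shows "pc p 4 (G p ((p + 1) div 2))
           ((-1) ^ ((p - 1) div 2) * 3 * of_nat p *
             (1 - 5 * of_nat p * fermat_quotient2 p + 15 * of_nat p ^ 2 * fermat_quotient2 p ^ 2))"
proof -
  define m where "m = (p - 1) div 2"
  have odd: "odd p" using pr p3 prime_odd_nat by auto
  have mp: "p = 2*m+1" unfolding m_def using odd by presburger
  define P :: rat where "P = of_nat p"
  define T :: rat where "T = 2^(2*m)"
  define W0 where "W0 = ff m 0"
  define W where "W = ff m (of_nat p * 1) * ff m (of_nat p * 2) * ff m (of_nat p * 3) * ff m (of_nat p * 4)"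
  define E H where "E = gg m 0" and "H = gg m (of_nat p * 2)"
  define M where "M = 1 - 5*(T-1) + 15*(T-1)^2"
  have "[2 ^ (p - 1) = 1] (mod p)" by (rule fermat_theorem[OF pr]) (use p3 in \<open>auto dest: dvd_imp_le\<close>)
  hence "p dvd 2 ^ (p - 1) - 1" by (simp add: cong_altdef_nat)
  then obtain k where k: "2 ^ (p - 1) - 1 = p * k" by blast
  have pm1: "p - 1 = 2*m" using mp by simp
  have Tk: "T - 1 = P * of_nat k"
  proof -
    have "(1::nat) \<le> 2 ^ (p-1)" by simp
    hence "(of_nat (2 ^ (p - 1) - 1) :: rat) = 2^(p-1) - 1" by (simp add: of_nat_diff)
    thus ?thesis unfolding T_def P_def pm1[symmetric] k by simp
  qed
  have fq: "P * fermat_quotient2 p = T - 1"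
  proof -
    have "P \<noteq> 0" unfolding P_def using p3 by simp
    moreover have "(2::rat) ^ (p - 1) = T" unfolding T_def pm1 ..
    ultimately show ?thesis unfolding fermat_quotient2_def P_def by simp
  qed
  have rhs: "((-1) ^ ((p - 1) div 2) * 3 * of_nat p *
             (1 - 5 * of_nat p * fermat_quotient2 p + 15 * of_nat p ^ 2 * fermat_quotient2 p ^ 2)) = P * ((-1)^m * 3 * M)"
  proof -
    have "15 * P ^ 2 * fermat_quotient2 p ^ 2 = 15 * (P * fermat_quotient2 p)^2" by (simp add: power_mult_distrib)
    thus ?thesis unfolding M_def fq[symmetric] m_def[symmetric] P_def[symmetric] by (simp add: algebra_simps)
  qed
  have pW0: "pint p W0" unfolding W0_def by (rule pint_ff) simp
  have Wb: "pc p 3 (ff m (of_nat p * of_nat b)) W0" for b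
    unfolding W0_def by (rule F_cong[OF mp]) simp
  have Wb': "pc p 3 (ff m (of_nat p * numeral b)) W0" for b
    using Wb[of "numeral b"] by simp
  have W1: "pc p 3 (ff m (of_nat p * 1)) W0" using Wb[of 1] by simp
  have pff: "pint p (ff m (of_nat p * numeral b))" for b by (rule pint_ff, rule pint_mult) simp_all
  have pff1: "pint p (ff m (of_nat p * 1))" by (rule pint_ff) simp
  have c12: "pc p 3 (ff m (of_nat p * 1) * ff m (of_nat p * 2)) (W0 * W0)"
    by (rule pc_mult[OF pff1 pW0 W1 Wb'])
  have c123: "pc p 3 (ff m (of_nat p * 1) * ff m (of_nat p * 2) * ff m (of_nat p * 3)) (W0 * W0 * W0)"
    by (rule pc_mult[OF _ pW0 c12 Wb']) (intro pint_mult pff pff1)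
  have c1234: "pc p 3 W (W0 * W0 * W0 * W0)"
    unfolding W_def by (rule pc_mult[OF _ pW0 c123 Wb']) (intro pint_mult pff pff1)
  have pE: "pint p E" unfolding E_def gg_def by (intro pint_prod pint_add) simp_all
  have pT: "pint p T" unfolding T_def by (intro pint_power) simp
  have pM: "pint p M" unfolding M_def by (intro pint_add pint_diff pint_mult pint_power pT) simp_all
  have pW: "pint p W" unfolding W_def by (intro pint_mult pff pff1)
  have cWE: "pc p 3 (W * E) (W0^4 * E)"
    using pc_mult[OF pW pE c1234 pc_refl[of 3 E]] by (simp add: power4_eq_xxxx)
  have HL: "pc p 3 H (E * (15 - 24 * T + 10 * T^2))"
    unfolding H_def E_def T_def using H2_cong[OF mp] by simp
  have c2: "pc p 3 (W0^4 * T^9 * M * H) (W0^4 * T^9 * M * (E * (15 - 24 * T + 10 * T^2)))"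
    by (rule pc_cmult[OF _ HL]) (intro pint_mult pint_power pW0 pT pM)
  have reord: "W0^4 * T^9 * M * (E * (15 - 24 * T + 10 * T^2)) = W0^4 * E * ((15 - 24*T + 10*T^2) * T^9 * M)"
    by (simp add: mult_ac)
  define Qp where "Qp = (1 + 3*T + 6*T^2 + 10*T^3 + 15*T^4 + 21*T^5 + 28*T^6 + 36*T^7 + 45*T^8 - 260*T^9 + 150*T^10)"
  have pQp: "pint p Qp" unfolding Qp_def by (intro pint_add pint_diff pint_mult pint_power pT pint_numeral pint_1)
  have "W0^4 * E * ((15 - 24*T + 10*T^2) * T^9 * M) = W0^4 * E * (1 + (T-1)^3 * Qp)"
    unfolding M_def Qp_def poly_id ..
  also have "\<dots> = W0^4 * E + P^3 * (W0^4 * E * of_nat k ^ 3 * Qp)"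
    unfolding Tk by (simp add: power_mult_distrib algebra_simps)
  finally have "W0^4 * T^9 * M * (E * (15 - 24 * T + 10 * T^2)) - W0^4 * E = of_nat p ^ 3 * (W0^4 * E * of_nat k ^ 3 * Qp)"
    unfolding P_def reord by simp
  hence c3: "pc p 3 (W0^4 * T^9 * M * (E * (15 - 24 * T + 10 * T^2))) (W0^4 * E)"
    by (rule pc_I[rotated]) (intro pint_mult pint_power pW0 pE pQp pint_nat)
  have cc: "pc p 3 (W * E) (W0^4 * H * T^9 * M)"
  proof -
    have "pc p 3 (W * E) (W0^4 * T^9 * M * H)"
      using pc_trans[OF cWE pc_sym[OF pc_trans[OF c2 c3]]] .
    thus ?thesis by (simp add: mult_ac)
  qed
  define c where "c = W0^4 * H * T^9"
  have uc: "punit c" unfolding c_def W0_def H_def T_def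
    by (intro punit_mult punit_power punit_ff0[OF mp] punit_g2[OF mp]) (use punit_nat[OF ndvd2] in simp)
  have c0: "c \<noteq> 0" using uc unfolding punit_def by simp
  have "pc p 3 (c * (W * E / c)) (c * M)" using cc c0 unfolding c_def by (simp add: mult.assoc)
  hence q3: "pc p 3 (W * E / c) M" by (rule pc_cancel[OF uc])
  have "pc p 3 ((-1)^m * 3 * (W * E / c)) ((-1)^m * 3 * M)"
    by (rule pc_cmult[OF _ q3]) (intro pint_mult pint_power, simp_all add: pint_uminus)
  hence "pc p (3+1) (of_nat p * ((-1)^m * 3 * (W * E / c))) (of_nat p * ((-1)^m * 3 * M))"
    by (rule pc_mult_p)
  moreover have "G p ((p + 1) div 2) = of_nat p * ((-1)^m * 3 * (W * E / c))"
    unfolding Gform[OF mp] c_def W_def E_def H_def W0_def T_def by (simp add: mult_ac)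
  ultimately show ?thesis unfolding rhs P_def by simp
qed

end

theorem lemma3p3:
  fixes p :: nat
  assumes "prime p" and "p > 3"
  shows "rat_cong_pow (G p ((p + 1) div 2))
           ((-1) ^ ((p - 1) div 2) * 3 * of_nat p *
             (1 - 5 * of_nat p * fermat_quotient2 p + 15 * of_nat p ^ 2 * fermat_quotient2 p ^ 2))
           p 4"
proof -
  obtain r where r: "pint p r" "G p ((p + 1) div 2) -
           ((-1) ^ ((p - 1) div 2) * 3 * of_nat p *
             (1 - 5 * of_nat p * fermat_quotient2 p + 15 * of_nat p ^ 2 * fermat_quotient2 p ^ 2))
           = of_nat p ^ 4 * r"
    using main_pc[OF assms] unfolding pc_def by blast
  have "coprime (snd (quotient_of r)) (int p)" by (rule pint_coprime[OF assms r(1)])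
  thus ?thesis unfolding rat_cong_pow_def using r(2) by (intro exI[of _ r]) (simp add: of_nat_power)
qed

end
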